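(* Let $c>0$ and $0<\varepsilon\le\delta<c/100$, and let $z\in\mathbb C$ satisfy $|\operatorname{Re}z|\ge c/\varepsilon$ and $|\operatorname{Im}z|\le\frac12$. Then for every integer $n\ge0$, $$\bigl|\ell^{(n)}_{c,\varepsilon}(z)\bigr|\le n!\,\frac{c\,e^{1.56\sqrt{\delta c}}}{\sinh c}\Bigl(\frac{2\varepsilon}{\delta}\Bigr)^n.$$
   Context: $\ell_c(x)=\frac{c}{\sinh c}\frac{\sin\sqrt{x^2-c^2}}{\sqrt{x^2-c^2}}$ is the Logan function, an entire function of $x\in\mathbb C$ (independent of the choice of square root), and $\ell_{c,\varepsilon}(x)=\ell_c(\varepsilon x)$; $\ell^{(n)}_{c,\varepsilon}$ denotes its $n$-th derivative. *)

theory Defs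
  imports "HOL-Analysis.Analysis"
begin

text \<open>sin(sqrt w)/sqrt w, extended continuously by 1 at w = 0 (entire in w,
independent of the choice of square root).\<close>
definition sinc_sqrt :: "complex \<Rightarrow> complex" where
  "sinc_sqrt w = (if w = 0 then 1 else sin (csqrt w) / csqrt w)"

definition logan :: "real \<Rightarrow> complex \<Rightarrow> complex" where
  "logan c x = complex_of_real (c / sinh c) * sinc_sqrt (x\<^sup>2 - (complex_of_real c)\<^sup>2)"

definition logan_eps :: "real \<Rightarrow> real \<Rightarrow> complex \<Rightarrow> complex" where
  "logan_eps c \<epsilon> x = logan c (complex_of_real \<epsilon> * x)"

end

theory Submission imports Defs "HOL-Complex_Analysis.Complex_Analysis" begin

definition sca :: "nat \<Rightarrow> complex" where "sca k = (-1)^k / fact (2*k+1)"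

lemma sin_odd_sums:
  fixes s :: complex
  shows "(\<lambda>k. sca k * s^(2*k+1)) sums sin s"
proof -
  have "(\<lambda>n. sin_coeff n *\<^sub>R s^n) sums sin s" by (rule sin_converges)
  moreover have "strict_mono (\<lambda>k::nat. 2*k+1)" by (rule strict_monoI) simp
  moreover have "\<And>n. n \<notin> range (\<lambda>k::nat. 2*k+1) \<Longrightarrow> sin_coeff n *\<^sub>R s^n = 0"
  proof -
    fix n :: nat assume "n \<notin> range (\<lambda>k::nat. 2*k+1)"
    hence "even n" by (metis oddE rangeI)
    thus "sin_coeff n *\<^sub>R s^n = 0" by (simp add: sin_coeff_def)
  qed
  ultimately have "(\<lambda>k. sin_coeff (2*k+1) *\<^sub>R s^(2*k+1)) sums sin s"
    using sums_mono_reindex[of "\<lambda>k::nat. 2*k+1" "\<lambda>n. sin_coeff n *\<^sub>R s^n"] by simp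
  moreover have "sin_coeff (2*k+1) *\<^sub>R s^(2*k+1) = sca k * s^(2*k+1)" for k
    by (simp add: sin_coeff_def sca_def scaleR_conv_of_real)
  ultimately show ?thesis by simp
qed

lemma sinc_sqrt_sums: "(\<lambda>k. sca k * w^k) sums sinc_sqrt w"
proof (cases "w = 0")
  case True
  have "(\<lambda>k. sca k * 0^k) sums sca 0" using powser_sums_zero[of sca] by simp
  thus ?thesis using True by (simp add: sinc_sqrt_def sca_def)
next
  case False
  define s where "s = csqrt w"
  have s0: "s \<noteq> 0" using False by (simp add: s_def)
  have w: "w = s^2" by (simp add: s_def)
  have "(\<lambda>k. sca k * s^(2*k+1) / s) sums (sin s / s)"
    using sums_divide[OF sin_odd_sums] .
  moreover have "sca k * s^(2*k+1) / s = sca k * w^k" for k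
  proof -
    have "s^(2*k) = w^k" by (simp add: w power_mult)
    thus ?thesis using s0 by simp
  qed
  ultimately have "(\<lambda>k. sca k * w^k) sums (sin s / s)" by (metis (no_types, lifting) sums_cong)
  thus ?thesis using False by (simp add: sinc_sqrt_def s_def)
qed

lemma sinc_sqrt_eq: "sinc_sqrt = (\<lambda>w. \<Sum>k. sca k * w^k)"
  using sinc_sqrt_sums sums_unique by fastforce

lemma sinc_sqrt_holo: "sinc_sqrt holomorphic_on UNIV"
proof -
  have sm: "\<And>y. summable (\<lambda>k. sca k * y^k)" using sinc_sqrt_sums sums_summable by blast
  have "\<And>x. sinc_sqrt field_differentiable at x"
    unfolding sinc_sqrt_eq field_differentiable_def
    using termdiffs_strong_converges_everywhere[OF sm] by blast
  thus ?thesis by (simp add: holomorphic_on_def field_differentiable_at_within)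
qed

lemma logan_eps_holo: "logan_eps c e holomorphic_on UNIV"
proof -
  have "logan_eps c e = (\<lambda>x. of_real (c / sinh c) * sinc_sqrt ((of_real e * x)\<^sup>2 - (of_real c)\<^sup>2))"
    by (simp add: fun_eq_iff logan_eps_def logan_def)
  moreover have "(\<lambda>x. sinc_sqrt ((of_real e * x)\<^sup>2 - (of_real c)\<^sup>2)) holomorphic_on UNIV"
  proof -
    have "(\<lambda>x. (of_real e * x)\<^sup>2 - (of_real c)\<^sup>2) holomorphic_on UNIV"
      by (auto intro!: holomorphic_intros)
    thus ?thesis using holomorphic_on_compose_gen[of "\<lambda>x. (of_real e * x)\<^sup>2 - (of_real c)\<^sup>2" UNIV sinc_sqrt UNIV]
      sinc_sqrt_holo by (auto simp: o_def)
  qed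
  ultimately show ?thesis by (auto intro!: holomorphic_intros)
qed

lemma norm_cos_le: "norm (cos z) \<le> exp \<bar>Im z\<bar>"
proof -
  have "norm (cos z) \<le> (norm (exp(\<i> * z)) + norm (exp(-(\<i> * z)))) / 2"
    unfolding cos_exp_eq by (metis divide_right_mono norm_divide norm_numeral norm_triangle_ineq zero_le_numeral real_norm_def)
  also have "\<dots> = (exp (- Im z) + exp (Im z)) / 2" by simp
  also have "\<dots> \<le> exp \<bar>Im z\<bar>" by (cases "Im z \<ge> 0") auto
  finally show ?thesis .
qed

lemma norm_sin_le: "norm (sin s) \<le> exp \<bar>Im s\<bar> * norm s"
proof -
  have "norm (sin s - sin 0) \<le> exp \<bar>Im s\<bar> * norm (s - 0)"
  proof (rule field_differentiable_bound[of "closed_segment 0 s" sin cos])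
    show "convex (closed_segment 0 s)" by simp
    show "(sin has_field_derivative cos z) (at z within closed_segment 0 s)" for z
      by (auto intro!: derivative_eq_intros)
    show "norm (cos z) \<le> exp \<bar>Im s\<bar>" if "z \<in> closed_segment 0 s" for z
    proof -
      have "\<exists>u. 0 \<le> u \<and> u \<le> 1 \<and> z = u *\<^sub>R s" using that by (auto simp: closed_segment_def)
      then obtain u where u: "0 \<le> u" "u \<le> 1" "z = u *\<^sub>R s" by blast
      have "\<bar>Im z\<bar> \<le> \<bar>Im s\<bar>" using u by (simp add: abs_mult mult_left_le_one_le)
      thus ?thesis using norm_cos_le[of z] by (meson exp_le_cancel_iff order_trans)
    qed
  qed auto
  thus ?thesis by simp
qed

lemma norm_sinc_sqrt_le: "norm (sinc_sqrt w) \<le> exp \<bar>Im (csqrt w)\<bar>"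
proof (cases "w = 0")
  case True thus ?thesis by (simp add: sinc_sqrt_def)
next
  case False
  hence "norm (csqrt w) > 0" by simp
  thus ?thesis using norm_sin_le[of "csqrt w"] False
    by (simp add: sinc_sqrt_def norm_divide divide_le_eq)
qed

lemma key:
  fixes a b c d :: real
  assumes c: "c > 0" and d: "d > 0" "d < c/100" and a: "\<bar>a\<bar> \<ge> c - d/2" and b: "\<bar>b\<bar> \<le> d"
  shows "sqrt ((a\<^sup>2 - b\<^sup>2 - c\<^sup>2)\<^sup>2 + (2*a*b)\<^sup>2) \<le> (a\<^sup>2 - b\<^sup>2 - c\<^sup>2) + 4*d*c"
proof -
  define A where "A = a\<^sup>2"
  define B where "B = b\<^sup>2"
  have ca: "c - d/2 \<ge> 0" using c d by simp
  have "(c - d/2)\<^sup>2 \<le> \<bar>a\<bar>\<^sup>2" using power_mono[OF a ca] .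
  moreover have "(c - d/2)\<^sup>2 = c\<^sup>2 - c*d + d\<^sup>2/4" by (simp add: power2_eq_square field_simps)
  moreover have "\<bar>a\<bar>\<^sup>2 = A" by (simp add: A_def)
  moreover have "d\<^sup>2/4 \<ge> 0" by simp
  ultimately have A: "A \<ge> c\<^sup>2 - c*d" by linarith
  have "\<bar>b\<bar>\<^sup>2 \<le> d\<^sup>2" using power_mono[OF b, of 2] by simp
  hence B: "B \<le> d\<^sup>2" "B \<ge> 0" by (simp_all add: B_def)
  have dd: "d*d \<le> d*c/100" using d by (simp add: mult_left_mono)
  have Bdd: "B \<le> d*d" using B by (simp add: power2_eq_square)
  have dc: "d*c > 0" using d c by simp
  hence "8*d*c - 4*B \<ge> 0" using Bdd dd by linarith
  hence t1: "(A - (c\<^sup>2 - c*d)) * (8*d*c - 4*B) \<ge> 0" using A by simp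
  have "c*d*B \<le> c*d*d\<^sup>2" using B c d by (simp add: mult_left_mono)
  moreover have "c*d*d\<^sup>2 \<le> c*c*d\<^sup>2" using c d by (simp add: mult_right_mono)
  moreover have "c*c*B \<le> c*c*d\<^sup>2" using B c by (simp add: mult_left_mono)
  ultimately have t2: "4*c\<^sup>2*(2*d\<^sup>2 - B) - 4*c*d*B \<ge> 0" by (simp add: power2_eq_square algebra_simps)
  have id: "8*d*c*(A - B - c\<^sup>2) + 16*d\<^sup>2*c\<^sup>2 - 4*A*B
      = (A - (c\<^sup>2 - c*d)) * (8*d*c - 4*B) + (4*c\<^sup>2*(2*d\<^sup>2 - B) - 4*c*d*B)"
    by (simp add: algebra_simps power2_eq_square)
  have main: "4*A*B \<le> 8*d*c*(A - B - c\<^sup>2) + 16*d\<^sup>2*c\<^sup>2" using id t1 t2 by linarith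
  have pos: "A - B - c\<^sup>2 + 4*d*c \<ge> 0"
  proof -
    have "B \<le> d*c/100" using Bdd dd by linarith
    moreover have "c*d = d*c" by simp
    ultimately show ?thesis using A dc by linarith
  qed
  have "(A - B - c\<^sup>2)\<^sup>2 + (2*a*b)\<^sup>2 \<le> (A - B - c\<^sup>2 + 4*d*c)\<^sup>2"
  proof -
    have "(2*a*b)\<^sup>2 = 4*A*B" by (simp add: A_def B_def power2_eq_square)
    thus ?thesis using main by (simp add: power2_eq_square algebra_simps)
  qed
  hence "sqrt ((A - B - c\<^sup>2)\<^sup>2 + (2*a*b)\<^sup>2) \<le> sqrt ((A - B - c\<^sup>2 + 4*d*c)\<^sup>2)"
    using real_sqrt_le_mono by blast
  also have "\<dots> = A - B - c\<^sup>2 + 4*d*c" using pos by simp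
  finally show ?thesis by (simp add: A_def B_def)
qed


lemma pt_bound:
  fixes c \<epsilon> \<delta> :: real and z x :: complex
  assumes c: "c > 0" and e: "0 < \<epsilon>" and ed: "\<epsilon> \<le> \<delta>" and dc: "\<delta> < c / 100"
    and re: "\<bar>Re z\<bar> \<ge> c / \<epsilon>" and im: "\<bar>Im z\<bar> \<le> 1/2"
    and x: "norm (z - x) \<le> \<delta> / (2*\<epsilon>)"
  shows "norm (logan_eps c \<epsilon> x) \<le> c / sinh c * exp (1.56 * sqrt (\<delta> * c))"
proof -
  define a where "a = \<epsilon> * Re x"
  define b where "b = \<epsilon> * Im x"
  define W where "W = (of_real \<epsilon> * x)\<^sup>2 - (complex_of_real c)\<^sup>2"
  have d: "\<delta> > 0" using e ed by simp
  have r1: "\<bar>Re (z - x)\<bar> \<le> \<delta> / (2*\<epsilon>)" using abs_Re_le_cmod[of "z-x"] x by linarith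
  have r2: "\<bar>Im (z - x)\<bar> \<le> \<delta> / (2*\<epsilon>)" using abs_Im_le_cmod[of "z-x"] x by linarith
  have er: "\<epsilon> * (\<delta> / (2*\<epsilon>)) = \<delta>/2" using e by simp
  have "c \<le> \<epsilon> * \<bar>Re z\<bar>" using re e by (simp add: pos_divide_le_eq mult.commute)
  moreover have "\<bar>Re x\<bar> \<ge> \<bar>Re z\<bar> - \<delta> / (2*\<epsilon>)" using r1 by simp
  hence "\<epsilon> * \<bar>Re x\<bar> \<ge> \<epsilon> * \<bar>Re z\<bar> - \<delta>/2"
    using mult_left_mono[of "\<bar>Re z\<bar> - \<delta> / (2*\<epsilon>)" "\<bar>Re x\<bar>" \<epsilon>] e er by (simp add: right_diff_distrib)
  ultimately have ha: "\<bar>a\<bar> \<ge> c - \<delta>/2" using e by (simp add: a_def abs_mult)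
  have "\<bar>Im x\<bar> \<le> 1/2 + \<delta> / (2*\<epsilon>)" using r2 im by simp
  hence "\<epsilon> * \<bar>Im x\<bar> \<le> \<epsilon> * (1/2 + \<delta> / (2*\<epsilon>))" using e by (simp add: mult_left_mono)
  also have "\<dots> = \<epsilon>/2 + \<delta>/2" using e by (simp add: distrib_left)
  finally have hb: "\<bar>b\<bar> \<le> \<delta>" using e ed by (simp add: b_def abs_mult)
  have ReW: "Re W = a\<^sup>2 - b\<^sup>2 - c\<^sup>2" by (simp add: W_def a_def b_def power2_eq_square algebra_simps)
  have ImW: "Im W = 2*a*b" by (simp add: W_def a_def b_def power2_eq_square algebra_simps)
  have cW: "cmod W = sqrt ((a\<^sup>2 - b\<^sup>2 - c\<^sup>2)\<^sup>2 + (2*a*b)\<^sup>2)" by (simp add: cmod_def ReW ImW)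
  have k: "cmod W \<le> Re W + 4*\<delta>*c" using key[OF c d dc ha hb] cW ReW by simp
  have "\<bar>Im (csqrt W)\<bar> \<le> sqrt ((cmod W - Re W) / 2)"
    using complex_Re_le_cmod[of W] by (cases "Im W = 0") (auto simp: abs_mult sgn_if)
  also have "\<dots> \<le> sqrt (2*(\<delta>*c))" using k by simp
  also have "\<dots> \<le> sqrt (1.56\<^sup>2 * (\<delta>*c))"
    using d c by (intro real_sqrt_le_mono mult_right_mono) (auto simp: power2_eq_square)
  also have "\<dots> = 1.56 * sqrt (\<delta>*c)" by (simp add: real_sqrt_mult)
  finally have im: "\<bar>Im (csqrt W)\<bar> \<le> 1.56 * sqrt (\<delta>*c)" .
  have sp: "c / sinh c > 0" using c by simp
  have "norm (logan_eps c \<epsilon> x) = c / sinh c * norm (sinc_sqrt W)"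
    using c by (simp add: logan_eps_def logan_def W_def norm_mult del: of_real_divide)
  also have "\<dots> \<le> c / sinh c * exp (1.56 * sqrt (\<delta> * c))"
    using norm_sinc_sqrt_le[of W] im sp by (meson exp_le_cancel_iff mult_left_mono order_trans less_imp_le)
  finally show ?thesis .
qed

theorem lemma4:
  fixes c \<epsilon> \<delta> :: real and z :: complex and n :: nat
  assumes "c > 0" and "0 < \<epsilon>" and "\<epsilon> \<le> \<delta>" and "\<delta> < c / 100"
    and "\<bar>Re z\<bar> \<ge> c / \<epsilon>" and "\<bar>Im z\<bar> \<le> 1/2"
  shows "cmod ((deriv ^^ n) (logan_eps c \<epsilon>) z)
           \<le> fact n * (c * exp (1.56 * sqrt (\<delta> * c)) / sinh c) * (2 * \<epsilon> / \<delta>) ^ n"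
proof -
  define r where "r = \<delta> / (2*\<epsilon>)"
  define M where "M = c / sinh c * exp (1.56 * sqrt (\<delta> * c))"
  have r: "r > 0" using assms by (simp add: r_def)
  have "cmod ((deriv ^^ n) (logan_eps c \<epsilon>) z) \<le> fact n * M / r^n"
  proof (rule Cauchy_inequality)
    show "logan_eps c \<epsilon> holomorphic_on ball z r"
      using logan_eps_holo holomorphic_on_subset by blast
    show "continuous_on (cball z r) (logan_eps c \<epsilon>)"
      using logan_eps_holo holomorphic_on_imp_continuous_on continuous_on_subset by blast
    show "0 < r" by (rule r)
    show "norm (logan_eps c \<epsilon> x) \<le> M" if "norm (z - x) = r" for x
      unfolding M_def using pt_bound[OF assms] that r_def by simp
  qed
  also have "fact n * M / r^n = fact n * (c * exp (1.56 * sqrt (\<delta> * c)) / sinh c) * (2 * \<epsilon> / \<delta>) ^ n"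
    using assms by (simp add: r_def M_def power_divide field_simps)
  finally show ?thesis .
qed

end
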